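(* Let $J$ be an orthogonal complex structure on $\mathbb R^{2n}$ ($n\ge2$), and let $\Lambda_J=\{a-iJa: a\in\mathbb R^{2n}\}\subset\mathbb C^{2n}$. Then the map $$S^{2n-1}\to S(\Lambda_J),\qquad a\mapsto \tfrac{1}{\sqrt2}(a-iJa),$$ is orientation preserving if and only if $J$ is compatible with the standard orientation of $\mathbb R^{2n}$.
   Context: $\mathbb C^{2n}=\mathbb R^{2n}\oplus i\mathbb R^{2n}$ carries the complex bilinear extension of the standard inner product. An orthogonal complex structure $J$ satisfies $J^2=-1$ and $\langle Ja,Jb\rangle=\langle a,b\rangle$; it is compatible with the orientation if there is a positively oriented basis of the form $e_1,Je_1,\dots,e_n,Je_n$. $\Lambda_J$ is a complex $n$-dimensional subspace of $\mathbb C^{2n}$ (complex structure given by multiplication by $i$, which corresponds to $J$ under $a\mapsto a-iJa$). $S^{2n-1}\subset\mathbb R^{2n}$ is the unit sphere with the standard boundary orientation; $S(\Lambda_J)$ is the unit sphere of $\Lambda_J$ oriented as the boundary of its unit ball, with $\Lambda_J$ carrying its complex orientation. *)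

theory Defs
  imports "HOL-Analysis.Analysis"
begin

text \<open>Ordered bases are represented as functions b :: nat => 'a, of which only
  the entries b 0, ..., b (d-1) matter.\<close>

definition is_obasis :: "'a::real_vector set \<Rightarrow> nat \<Rightarrow> (nat \<Rightarrow> 'a) \<Rightarrow> bool" where
  "is_obasis V d b \<longleftrightarrow> (\<forall>k<d. b k \<in> V) \<and> inj_on b {..<d} \<and>
     independent (b ` {..<d}) \<and> span (b ` {..<d}) = V"

definition same_orient :: "'a::real_normed_vector set \<Rightarrow> nat \<Rightarrow> (nat \<Rightarrow> 'a) \<Rightarrow> (nat \<Rightarrow> 'a) \<Rightarrow> bool" where
  "same_orient V d b c \<longleftrightarrow>
     (\<exists>\<gamma> :: real \<Rightarrow> nat \<Rightarrow> 'a.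
        (\<forall>t\<in>{0..1}. is_obasis V d (\<gamma> t)) \<and>
        (\<forall>k<d. continuous_on {0..1} (\<lambda>t. \<gamma> t k)) \<and>
        (\<forall>k<d. \<gamma> 0 k = b k \<and> \<gamma> 1 k = c k))"

definition std_basis :: "nat \<Rightarrow> real^'n::{finite,linorder}" where
  "std_basis k = axis (sorted_list_of_set (UNIV :: 'n set) ! k) 1"

definition std_pos :: "(nat \<Rightarrow> real^'n::{finite,linorder}) \<Rightarrow> bool" where
  "std_pos b \<longleftrightarrow> same_orient UNIV CARD('n) b std_basis"

definition cvec :: "real^'n \<Rightarrow> complex^'n" where
  "cvec a = (\<chi> k. complex_of_real (a $ k))"

definition cmul :: "complex \<Rightarrow> complex^'n \<Rightarrow> complex^'n" where
  "cmul c v = (\<chi> k. c * (v $ k))"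

definition cplx_pos :: "(complex^'n) set \<Rightarrow> nat \<Rightarrow> (nat \<Rightarrow> complex^'n) \<Rightarrow> bool" where
  "cplx_pos W d b \<longleftrightarrow>
     (\<exists>w :: nat \<Rightarrow> complex^'n.
        is_obasis W d (\<lambda>k. if even k then w (k div 2) else cmul \<i> (w (k div 2))) \<and>
        same_orient W d b (\<lambda>k. if even k then w (k div 2) else cmul \<i> (w (k div 2))))"

text \<open>Unit sphere of a subspace, tangent spaces, boundary orientation
  (outward normal first).\<close>

definition usphere :: "'a::real_inner set \<Rightarrow> 'a set" where
  "usphere V = {x \<in> V. norm x = 1}"

definition tangent :: "'a::real_inner set \<Rightarrow> 'a \<Rightarrow> 'a set" where
  "tangent V x = {v \<in> V. inner x v = 0}"

definition pos_tangent ::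
  "'a::real_inner set \<Rightarrow> nat \<Rightarrow> ((nat \<Rightarrow> 'a) \<Rightarrow> bool) \<Rightarrow> 'a \<Rightarrow> (nat \<Rightarrow> 'a) \<Rightarrow> bool" where
  "pos_tangent V d P x v \<longleftrightarrow>
     is_obasis (tangent V x) (d - 1) v \<and> P (\<lambda>k. if k = 0 then x else v (k - 1))"

definition sphere_orient_preserving ::
  "'a::real_inner set \<Rightarrow> nat \<Rightarrow> ((nat \<Rightarrow> 'a) \<Rightarrow> bool) \<Rightarrow>
   'b::real_inner set \<Rightarrow> nat \<Rightarrow> ((nat \<Rightarrow> 'b) \<Rightarrow> bool) \<Rightarrow> ('a \<Rightarrow> 'b) \<Rightarrow> bool" where
  "sphere_orient_preserving V dV P W dW Q f \<longleftrightarrow>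
     (\<forall>x\<in>usphere V. f x \<in> usphere W) \<and>
     (\<forall>x\<in>usphere V. \<exists>f'. (f has_derivative f') (at x within usphere V) \<and>
        (\<forall>v. pos_tangent V dV P x v \<longrightarrow> pos_tangent W dW Q (f x) (\<lambda>k. f' (v k))))"

definition orth_cx_structure :: "(real^'n \<Rightarrow> real^'n) \<Rightarrow> bool" where
  "orth_cx_structure J \<longleftrightarrow> linear J \<and> (\<forall>a. J (J a) = - a) \<and>
     (\<forall>a b. inner (J a) (J b) = inner a b)"

definition orient_compatible :: "(real^('n::{finite,linorder}) \<Rightarrow> real^('n::{finite,linorder})) \<Rightarrow> bool" where
  "orient_compatible J \<longleftrightarrow>
     (\<exists>e. is_obasis UNIV CARD('n) (\<lambda>k. if even k then e (k div 2) else J (e (k div 2))) \<and>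
        std_pos (\<lambda>k. if even k then e (k div 2) else J (e (k div 2))))"

definition Lambda :: "(real^'n \<Rightarrow> real^'n) \<Rightarrow> (complex^'n) set" where
  "Lambda J = {cvec a - cmul \<i> (cvec (J a)) | a. True}"

end

theory Submission
  imports Defs
begin


lemma is_obasis_cong:
  assumes "is_obasis V d b" "\<And>k. k < d \<Longrightarrow> b k = c k"
  shows "is_obasis V d c"
proof -
  have "b ` {..<d} = c ` {..<d}" using assms(2) by auto
  moreover have "inj_on c {..<d}" using assms unfolding is_obasis_def inj_on_def by auto
  ultimately show ?thesis using assms unfolding is_obasis_def by auto
qed

lemma same_orient_cong:
  assumes "same_orient V d b c" "\<And>k. k < d \<Longrightarrow> b k = b' k" "\<And>k. k < d \<Longrightarrow> c k = c' k"
  shows "same_orient V d b' c'"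
  using assms unfolding same_orient_def by metis

lemma same_orient_refl:
  assumes "is_obasis V d b" shows "same_orient V d b b"
  unfolding same_orient_def using assms by (intro exI[of _ "\<lambda>t. b"]) auto

lemma same_orient_sym:
  assumes "same_orient V d b c" shows "same_orient V d c b"
proof -
  obtain g :: "real \<Rightarrow> nat \<Rightarrow> _" where g: "\<forall>t\<in>{0..1}. is_obasis V d (g t)"
    "\<forall>k<d. continuous_on {0..1} (\<lambda>t. g t k)" "\<forall>k<d. g 0 k = b k \<and> g 1 k = c k"
    using assms unfolding same_orient_def by blast
  show ?thesis unfolding same_orient_def
  proof (intro exI[of _ "\<lambda>t. g (1 - t)"] conjI allI ballI impI)
    fix t :: real assume "t \<in> {0..1}" then show "is_obasis V d (g (1 - t))" using g by auto
  next
    fix k assume k: "k < d"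
    have "continuous_on {0..1} ((\<lambda>t. g t k) \<circ> (\<lambda>t. 1 - t))"
      by (rule continuous_on_compose) (auto intro!: continuous_intros continuous_on_subset[OF g(2)[rule_format, OF k]])
    then show "continuous_on {0..1} (\<lambda>t. g (1 - t) k)" by (simp add: o_def)
  qed (use g in auto)
qed

lemma same_orient_trans:
  assumes "same_orient V d b c" "same_orient V d c e" shows "same_orient V d b e"
proof -
  obtain g :: "real \<Rightarrow> nat \<Rightarrow> _" where g: "\<forall>t\<in>{0..1}. is_obasis V d (g t)"
    "\<forall>k<d. continuous_on {0..1} (\<lambda>t. g t k)" "\<forall>k<d. g 0 k = b k \<and> g 1 k = c k"
    using assms(1) unfolding same_orient_def by blast
  obtain h :: "real \<Rightarrow> nat \<Rightarrow> _" where h: "\<forall>t\<in>{0..1}. is_obasis V d (h t)"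
    "\<forall>k<d. continuous_on {0..1} (\<lambda>t. h t k)" "\<forall>k<d. h 0 k = c k \<and> h 1 k = e k"
    using assms(2) unfolding same_orient_def by blast
  show ?thesis unfolding same_orient_def
  proof (intro exI[of _ "\<lambda>t. if t \<le> 1/2 then g (2*t) else h (2*t-1)"] conjI allI ballI impI)
    fix t :: real assume "t \<in> {0..1}" then show "is_obasis V d (if t \<le> 1/2 then g (2*t) else h (2*t-1))"
      using g h by auto
  next
    fix k assume k: "k < d"
    have "path ((\<lambda>t. g t k) +++ (\<lambda>t. h t k))"
      using g h k by (subst path_join) (auto simp: path_def pathstart_def pathfinish_def)
    then show "continuous_on {0..1} (\<lambda>t. (if t \<le> 1/2 then g (2*t) else h (2*t-1)) k)"
      by (simp add: path_def joinpaths_def if_distrib[where f="\<lambda>f. f k"])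
  qed (use g h in auto)
qed

lemma is_obasis_image:
  assumes "is_obasis V d b" "linear T" "inj_on T V"
  shows "is_obasis (T ` V) d (\<lambda>k. T (b k))"
proof -
  have bV: "\<And>k. k < d \<Longrightarrow> b k \<in> V" using assms unfolding is_obasis_def by auto
  have sp: "span (b ` {..<d}) = V" "independent (b ` {..<d})" "inj_on b {..<d}"
    using assms unfolding is_obasis_def by auto
  have im: "(\<lambda>k. T (b k)) ` {..<d} = T ` (b ` {..<d})" by auto
  have "inj_on (\<lambda>k. T (b k)) {..<d}"
    using sp(3) assms(3) bV unfolding inj_on_def by auto
  moreover have "independent (T ` (b ` {..<d}))"
    by (rule linear_independent_injective_image[OF assms(2) sp(2)]) (simp add: sp(1) assms(3))
  moreover have "span (T ` (b ` {..<d})) = T ` V"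
    by (simp add: linear_span_image[OF assms(2)] sp(1))
  ultimately show ?thesis using bV unfolding is_obasis_def im by auto
qed

lemma same_orient_image:
  fixes T :: "'a::euclidean_space \<Rightarrow> 'b::euclidean_space"
  assumes "same_orient V d b c" "linear T" "inj_on T V"
  shows "same_orient (T ` V) d (\<lambda>k. T (b k)) (\<lambda>k. T (c k))"
proof -
  obtain g :: "real \<Rightarrow> nat \<Rightarrow> _" where g: "\<forall>t\<in>{0..1}. is_obasis V d (g t)"
    "\<forall>k<d. continuous_on {0..1} (\<lambda>t. g t k)" "\<forall>k<d. g 0 k = b k \<and> g 1 k = c k"
    using assms(1) unfolding same_orient_def by blast
  show ?thesis unfolding same_orient_def
    apply (intro exI[of _ "\<lambda>t k. T (g t k)"] conjI allI ballI impI)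
    using g is_obasis_image[OF _ assms(2,3)] linear_continuous_on_compose[OF _ assms(2)] by auto blast
qed



definition Lm :: "(real^'n \<Rightarrow> real^'n) \<Rightarrow> real^'n \<Rightarrow> complex^'n" where
  "Lm J a = (1 / sqrt 2) *\<^sub>R (cvec a - cmul \<i> (cvec (J a)))"

definition Linv :: "complex^'n \<Rightarrow> real^'n" where
  "Linv y = sqrt 2 *\<^sub>R (\<chi> k. Re (y $ k))"

lemma Re_Lm: "Re (Lm J a $ k) = a $ k / sqrt 2" and Im_Lm: "Im (Lm J a $ k) = - (J a $ k / sqrt 2)"
  by (simp_all add: Lm_def cvec_def cmul_def)

lemma Linv_Lm: "Linv (Lm J a) = a"
  by (simp add: Linv_def vec_eq_iff Re_Lm)

lemma linear_Linv: "linear Linv"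
  by (rule linearI) (simp_all add: Linv_def vec_eq_iff algebra_simps)

lemma linear_Lm:
  assumes "linear J" shows "linear (Lm J)"
proof (rule linearI)
  fix a b show "Lm J (a + b) = Lm J a + Lm J b"
    by (simp add: vec_eq_iff complex_eq_iff Re_Lm Im_Lm linear_add[OF assms] add_divide_distrib)
next
  fix c :: real and a show "Lm J (c *\<^sub>R a) = c *\<^sub>R Lm J a"
    by (simp add: vec_eq_iff complex_eq_iff Re_Lm Im_Lm linear_cmul[OF assms])
qed

lemma inj_Lm: "inj (Lm J)"
  by (metis Linv_Lm injI)

lemma cmul_Lm:
  assumes "\<And>a. J (J a) = - a" shows "cmul \<i> (Lm J a) = Lm J (J a)"
  by (simp add: vec_eq_iff complex_eq_iff Re_Lm Im_Lm assms cmul_def)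

lemma inner_Lm:
  assumes "\<And>a b. inner (J a) (J b) = inner a b"
  shows "inner (Lm J a) (Lm J b) = inner a b"
proof -
  have "inner (Lm J a) (Lm J b) = (\<Sum>k\<in>UNIV. (a$k * b$k + J a $ k * J b $ k) / 2)"
    unfolding inner_vec_def inner_complex_def Re_Lm Im_Lm
    by (intro sum.cong) (auto simp: field_simps)
  also have "\<dots> = (inner a b + inner (J a) (J b)) / 2"
    by (simp add: inner_vec_def sum.distrib sum_divide_distrib[symmetric])
  finally show ?thesis using assms by simp
qed

lemma Lambda_eq:
  assumes "linear J" shows "Lambda J = range (Lm J)"
proof -
  have 1: "cvec a - cmul \<i> (cvec (J a)) = Lm J (sqrt 2 *\<^sub>R a)" for a
    by (simp add: vec_eq_iff complex_eq_iff Re_Lm Im_Lm linear_cmul[OF assms] cvec_def cmul_def)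
  have 2: "range (\<lambda>a::real^'a. sqrt 2 *\<^sub>R a) = UNIV"
    by (auto intro!: image_eqI[where x="x /\<^sub>R sqrt 2" for x])
  have "Lambda J = (\<lambda>a. Lm J (sqrt 2 *\<^sub>R a)) ` UNIV" unfolding Lambda_def using 1 by auto
  also have "\<dots> = Lm J ` range (\<lambda>a. sqrt 2 *\<^sub>R a)" by (simp add: image_image)
  finally show ?thesis using 2 by simp
qed



lemma Basis_real_vec: "(Basis :: (real^'n) set) = range (\<lambda>i. axis i 1)"
  by (auto simp: Basis_vec_def)

lemma std_basis_props:
  shows "inj_on (std_basis :: nat \<Rightarrow> real^('n::{finite,linorder})) {..<CARD('n)}"
    and "(std_basis :: nat \<Rightarrow> real^('n::{finite,linorder})) ` {..<CARD('n)} = Basis"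
proof -
  let ?l = "sorted_list_of_set (UNIV :: 'n set)"
  have d: "distinct ?l" and len: "length ?l = CARD('n)" and st: "set ?l = UNIV" by auto
  show "inj_on (std_basis :: nat \<Rightarrow> real^('n::{finite,linorder})) {..<CARD('n)}"
    unfolding inj_on_def std_basis_def
    using d len by (auto simp: axis_eq_axis nth_eq_iff_index_eq)
  have "(\<lambda>k. ?l ! k) ` {..<CARD('n)} = set ?l"
    using len by (auto simp: set_conv_nth)
  then have u: "(\<lambda>k. ?l ! k) ` {..<CARD('n)} = UNIV" using st by simp
  have "(std_basis :: nat \<Rightarrow> real^('n::{finite,linorder})) ` {..<CARD('n)} = (\<lambda>i. axis i 1) ` ((\<lambda>k. ?l ! k) ` {..<CARD('n)})"
    unfolding std_basis_def image_image by simp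
  then show "(std_basis :: nat \<Rightarrow> real^('n::{finite,linorder})) ` {..<CARD('n)} = Basis"
    unfolding u Basis_real_vec by simp
qed

lemma is_obasis_std: "is_obasis UNIV CARD('n) (std_basis :: nat \<Rightarrow> real^('n::{finite,linorder}))"
  unfolding is_obasis_def using std_basis_props[where 'n='n] by (simp add: independent_Basis span_Basis)

lemma span_Basis_minus:
  fixes b :: "'a::euclidean_space" assumes "b \<in> Basis"
  shows "span (Basis - {b}) = {v. inner b v = 0}"
proof
  show "span (Basis - {b}) \<subseteq> {v. inner b v = 0}"
  proof (rule span_minimal)
    show "Basis - {b} \<subseteq> {v. b \<bullet> v = 0}" using assms by (auto simp: inner_not_same_Basis)
    show "subspace {v. b \<bullet> v = 0}" by (auto simp: subspace_def inner_add_right)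
  qed
  show "{v. inner b v = 0} \<subseteq> span (Basis - {b})"
  proof
    fix v :: 'a assume "v \<in> {v. inner b v = 0}"
    then have 0: "inner v b = 0" by (simp add: inner_commute)
    have "v = (\<Sum>u\<in>Basis. (v \<bullet> u) *\<^sub>R u)" by (simp add: euclidean_representation)
    also have "\<dots> = (v \<bullet> b) *\<^sub>R b + (\<Sum>u\<in>Basis - {b}. (v \<bullet> u) *\<^sub>R u)"
      using assms by (rule sum.remove[OF finite_Basis])
    also have "\<dots> = (\<Sum>u\<in>Basis - {b}. (v \<bullet> u) *\<^sub>R u)"
      using 0 by simp
    also have "\<dots> \<in> span (Basis - {b})"
      by (intro span_sum span_scale span_base) 
    finally show "v \<in> span (Basis - {b})" .
  qed
qed

lemma is_obasis_std_tangent: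
  assumes "CARD('n::{finite,linorder}) \<ge> 1"
  shows "is_obasis (tangent UNIV (std_basis 0 :: real^('n::{finite,linorder}))) (CARD('n) - 1) (\<lambda>k. std_basis (Suc k))"
proof -
  let ?N = "CARD('n)"
  note P = std_basis_props[where 'n='n]
  have im: "(\<lambda>k. std_basis (Suc k) :: real^('n::{finite,linorder})) ` {..<?N - 1} = Basis - {std_basis 0}"
  proof -
    have s: "Suc ` {..<?N - 1} = {..<?N} - {0}"
      using assms by (auto simp: image_Suc_lessThan)
    have "(\<lambda>k. std_basis (Suc k) :: real^('n::{finite,linorder})) ` {..<?N - 1} = std_basis ` (Suc ` {..<?N - 1})"
      by (simp add: image_image)
    also have "\<dots> = std_basis ` ({..<?N} - {0})" by (simp only: s)
    also have "\<dots> = std_basis ` {..<?N} - std_basis ` {0}"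
      using P(1) assms by (intro inj_on_image_set_diff) auto
    finally show ?thesis using P(2) by simp
  qed
  have b0: "(std_basis 0 :: real^('n::{finite,linorder})) \<in> Basis" using P(2) assms by auto
  have inj: "inj_on (\<lambda>k. std_basis (Suc k) :: real^('n::{finite,linorder})) {..<?N - 1}"
  proof -
    have "inj_on (std_basis \<circ> Suc :: nat \<Rightarrow> real^('n::{finite,linorder})) {..<?N - 1}"
      by (rule comp_inj_on[OF inj_Suc[THEN inj_on_subset] inj_on_subset[OF P(1)]]) auto
    then show ?thesis by (simp add: o_def)
  qed
  have mem: "std_basis (Suc k) \<in> Basis - {std_basis 0 :: real^('n::{finite,linorder})}" if "k < ?N - 1" for k
    using that im by blast
  have tan: "std_basis (Suc k) \<in> {v. inner (std_basis 0 :: real^('n::{finite,linorder})) v = 0}" if "k < ?N - 1" for k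
    using mem[OF that] b0 inner_not_same_Basis[of "std_basis 0 :: real^('n::{finite,linorder})" "std_basis (Suc k)"]
    by auto
  show ?thesis unfolding is_obasis_def im tangent_def
    using inj span_Basis_minus[OF b0] independent_mono[OF independent_Basis, of "Basis - {std_basis 0}"] tan
    by blast
qed



lemma deriv_on_sphere:
  fixes T :: "'a::euclidean_space \<Rightarrow> 'b::euclidean_space" and x v :: 'a
  assumes "linear T" "norm x = 1" "norm v = 1" "inner x v = 0"
    and d: "(T has_derivative f') (at x within usphere UNIV)"
  shows "f' v = T v"
proof -
  define g where "g = (\<lambda>t::real. cos t *\<^sub>R x + sin t *\<^sub>R v)"
  have g0: "g 0 = x" by (simp add: g_def)
  have "(g has_vector_derivative (- sin 0 *\<^sub>R x + cos 0 *\<^sub>R v)) (at 0)"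
    unfolding g_def by (auto intro!: derivative_eq_intros)
  then have dg: "(g has_derivative (\<lambda>h. h *\<^sub>R v)) (at 0)"
    by (simp add: has_vector_derivative_def)
  have sph: "g ` UNIV \<subseteq> usphere UNIV"
  proof (clarsimp simp: usphere_def)
    fix t
    have "(norm (g t))\<^sup>2 = inner (g t) (g t)" by (simp add: power2_norm_eq_inner)
    also have "\<dots> = (cos t)\<^sup>2 * inner x x + (sin t)\<^sup>2 * inner v v + 2 * cos t * sin t * inner x v"
      unfolding g_def by (simp add: inner_add_left inner_add_right power2_eq_square inner_commute[of v x] algebra_simps)
    also have "\<dots> = 1" using assms by (simp add: power2_norm_eq_inner[symmetric])
    finally have "(norm (g t))\<^sup>2 = 1\<^sup>2" by simp
    then show "norm (g t) = 1" using power2_eq_imp_eq norm_ge_zero zero_le_one by blast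
  qed
  have d1: "((T \<circ> g) has_derivative (f' \<circ> (\<lambda>h. h *\<^sub>R v))) (at 0 within UNIV)"
    by (rule diff_chain_within[OF has_derivative_subset[OF dg] has_derivative_subset[OF d[folded g0]]]) (use sph in auto)
  have d2: "((T \<circ> g) has_derivative (T \<circ> (\<lambda>h. h *\<^sub>R v))) (at 0)"
    by (rule diff_chain_at[OF dg linear_imp_has_derivative[OF assms(1)]])
  have "f' \<circ> (\<lambda>h. h *\<^sub>R v) = T \<circ> (\<lambda>h. h *\<^sub>R v)"
    using has_derivative_unique[OF d1[simplified] d2] by simp
  then show ?thesis by (metis comp_apply scaleR_one)
qed

context
  fixes J :: "real^('n::{finite,linorder}) \<Rightarrow> real^('n::{finite,linorder})"
  assumes oc: "orth_cx_structure J"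
begin

lemma linJ: "linear J" and JJ: "\<And>a. J (J a) = - a" and innJ: "\<And>a b. inner (J a) (J b) = inner a b"
  using oc unfolding orth_cx_structure_def by auto

lemma LL: "linear (Lm J)" by (rule linear_Lm[OF linJ])
lemma Lam: "Lambda J = range (Lm J)" by (rule Lambda_eq[OF linJ])
lemma inner_LmJ: "inner (Lm J a) (Lm J b) = inner a b" by (rule inner_Lm[OF innJ])
lemma norm_LmJ: "norm (Lm J a) = norm a" by (simp add: norm_eq_sqrt_inner inner_LmJ)

lemma tangent_img: "Lm J ` tangent UNIV x = tangent (Lambda J) (Lm J x)"
proof
  show "Lm J ` tangent UNIV x \<subseteq> tangent (Lambda J) (Lm J x)"
    by (auto simp: tangent_def Lam inner_LmJ)
  show "tangent (Lambda J) (Lm J x) \<subseteq> Lm J ` tangent UNIV x"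
    by (auto simp: tangent_def Lam inner_LmJ)
qed

lemma Linv_img: "Linv ` Lambda J = UNIV"
  unfolding Lam by (auto simp: image_image Linv_Lm)

lemma Linv_inj: "inj_on Linv (Lambda J)"
  unfolding Lam inj_on_def by (auto simp: Linv_Lm)

lemma push:
  assumes card: "CARD('n) = d"
    and Be: "is_obasis UNIV d (\<lambda>k. if even k then e (k div 2) else J (e (k div 2)))"
       "std_pos (\<lambda>k. if even k then e (k div 2) else J (e (k div 2)))"
    and c: "std_pos c"
  shows "cplx_pos (Lambda J) d (\<lambda>k. Lm J (c k))"
proof -
  let ?B = "\<lambda>k. if even k then e (k div 2) else J (e (k div 2))"
  have W: "(\<lambda>k. if even k then Lm J (e (k div 2)) else cmul \<i> (Lm J (e (k div 2)))) = (\<lambda>k. Lm J (?B k))"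
    by (auto simp: cmul_Lm[OF JJ])
  have so: "same_orient UNIV d c ?B"
    using c Be(2) card unfolding std_pos_def by (metis same_orient_sym same_orient_trans)
  have "is_obasis (Lambda J) d (\<lambda>k. Lm J (?B k))"
    using is_obasis_image[OF Be(1) LL] inj_Lm Lam by (metis inj_on_subset subset_UNIV)
  moreover have "same_orient (Lambda J) d (\<lambda>k. Lm J (c k)) (\<lambda>k. Lm J (?B k))"
    using same_orient_image[OF so LL] inj_Lm Lam by (metis inj_on_subset subset_UNIV)
  ultimately show ?thesis unfolding cplx_pos_def W[symmetric] by (intro exI[of _ "\<lambda>j. Lm J (e j)"]) simp
qed

end



theorem proposition5p1:
  fixes n :: nat and J :: "real^('n::{finite,linorder}) \<Rightarrow> real^('n::{finite,linorder})"
  assumes "CARD('n::{finite,linorder}) = 2 * n" and "n \<ge> 2" and "orth_cx_structure J"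
  shows "sphere_orient_preserving (UNIV :: (real^('n::{finite,linorder})) set) (2 * n) std_pos
           (Lambda J) (2 * n) (cplx_pos (Lambda J) (2 * n))
           (\<lambda>a. (1 / sqrt 2) *\<^sub>R (cvec a - cmul \<i> (cvec (J a))))
         \<longleftrightarrow> orient_compatible J"
proof -
  note oc = assms(3)
  have card: "CARD('n) = 2 * n" by (rule assms(1))
  have f_eq: "(\<lambda>a. (1 / sqrt 2) *\<^sub>R (cvec a - cmul \<i> (cvec (J a)))) = Lm J"
    by (simp add: Lm_def fun_eq_iff)
  show ?thesis unfolding f_eq
  proof
    assume SOP: "sphere_orient_preserving (UNIV :: (real^('n::{finite,linorder})) set) (2 * n) std_pos
           (Lambda J) (2 * n) (cplx_pos (Lambda J) (2 * n)) (Lm J)"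
    define x :: "real^('n::{finite,linorder})" where "x = std_basis 0"
    define v :: "nat \<Rightarrow> real^('n::{finite,linorder})" where "v = (\<lambda>k. std_basis (Suc k))"
    have xs: "x \<in> usphere UNIV" by (simp add: usphere_def x_def std_basis_def)
    have c_eq: "(\<lambda>k. if k = 0 then x else v (k - 1)) = std_basis"
      by (auto simp: fun_eq_iff x_def v_def simp del: std_basis_def)
    have pt: "pos_tangent UNIV (2 * n) std_pos x v"
      unfolding pos_tangent_def c_eq std_pos_def
      using is_obasis_std_tangent[where 'n='n] is_obasis_std[where 'n='n] same_orient_refl card assms(2)
      by (auto simp: x_def v_def simp del: std_basis_def)
    obtain f' where d: "(Lm J has_derivative f') (at x within usphere UNIV)"
      and P: "\<forall>v. pos_tangent UNIV (2 * n) std_pos x v \<longrightarrow>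
                 pos_tangent (Lambda J) (2 * n) (cplx_pos (Lambda J) (2 * n)) (Lm J x) (\<lambda>k. f' (v k))"
      using SOP xs unfolding sphere_orient_preserving_def by blast
    have cp: "cplx_pos (Lambda J) (2 * n) (\<lambda>k. if k = 0 then Lm J x else f' (v (k - 1)))"
      using P pt unfolding pos_tangent_def by blast
    have eqv: "(if k = 0 then Lm J x else f' (v (k - 1))) = Lm J (std_basis k)" if k: "k < 2 * n" for k
    proof (cases "k = 0")
      case True then show ?thesis by (simp add: x_def)
    next
      case False
      then have vk: "v (k - 1) = std_basis k" by (simp add: v_def)
      have B: "std_basis k \<in> (Basis :: (real^('n::{finite,linorder})) set)" "x \<in> (Basis :: (real^('n::{finite,linorder})) set)"
        using std_basis_props(2)[where 'n='n] k card assms(2) by (auto simp: x_def simp del: std_basis_def)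
      have ne: "x \<noteq> std_basis k"
        using std_basis_props(1)[where 'n='n] k card False assms(2) unfolding x_def inj_on_def
        by (metis lessThan_iff mult_pos_pos pos2 less_le_trans numeral_le_iff zero_less_numeral)
      have "f' (std_basis k) = Lm J (std_basis k)"
        by (rule deriv_on_sphere[OF LL[OF oc] _ _ _ d]) (use B ne in \<open>auto simp: inner_not_same_Basis simp del: std_basis_def\<close>)
      then show ?thesis using False vk by simp
    qed
    obtain w where W: "is_obasis (Lambda J) (2 * n) (\<lambda>k. if even k then w (k div 2) else cmul \<i> (w (k div 2)))"
      and SO: "same_orient (Lambda J) (2 * n) (\<lambda>k. if k = 0 then Lm J x else f' (v (k - 1)))
                  (\<lambda>k. if even k then w (k div 2) else cmul \<i> (w (k div 2)))"
      using cp unfolding cplx_pos_def by blast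
    let ?W = "\<lambda>k. if even k then w (k div 2) else cmul \<i> (w (k div 2))"
    have SO': "same_orient (Lambda J) (2 * n) (\<lambda>k. Lm J (std_basis k)) ?W"
      by (rule same_orient_cong[OF SO]) (use eqv in auto)
    have SO2: "same_orient (Linv ` Lambda J) (2 * n) (\<lambda>k. Linv (Lm J (std_basis k))) (\<lambda>k. Linv (?W k))"
      by (rule same_orient_image[OF SO' linear_Linv Linv_inj[OF oc]])
    have W2: "is_obasis (Linv ` Lambda J) (2 * n) (\<lambda>k. Linv (?W k))"
      by (rule is_obasis_image[OF W linear_Linv Linv_inj[OF oc]])
    define e where "e = (\<lambda>j. Linv (w j))"
    let ?B = "\<lambda>k. if even k then e (k div 2) else J (e (k div 2))"
    have WB: "Linv (?W k) = ?B k" if k: "k < 2 * n" for k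
    proof -
      have "2 * (k div 2) < 2 * n" using k by linarith
      then have "?W (2 * (k div 2)) \<in> Lambda J" using W unfolding is_obasis_def by blast
      then have "w (k div 2) \<in> Lambda J" by simp
      then obtain a where a: "w (k div 2) = Lm J a" unfolding Lam[OF oc] by blast
      show ?thesis
        using a by (simp add: e_def cmul_Lm[OF JJ[OF oc]] Linv_Lm)
    qed
    have so: "same_orient UNIV (2 * n) std_basis ?B"
      by (rule same_orient_cong[OF SO2[unfolded Linv_img[OF oc] Linv_Lm]]) (use WB in auto)
    have ob: "is_obasis UNIV (2 * n) ?B"
      by (rule is_obasis_cong[OF W2[unfolded Linv_img[OF oc]]]) (use WB in auto)
    show "orient_compatible J"
      unfolding orient_compatible_def std_pos_def card
      using so ob same_orient_sym by blast
  next
    assume "orient_compatible J"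
    then obtain e where Be: "is_obasis UNIV (2 * n) (\<lambda>k. if even k then e (k div 2) else J (e (k div 2)))"
       "std_pos (\<lambda>k. if even k then e (k div 2) else J (e (k div 2)))"
      unfolding orient_compatible_def card by blast
    show "sphere_orient_preserving (UNIV :: (real^('n::{finite,linorder})) set) (2 * n) std_pos
           (Lambda J) (2 * n) (cplx_pos (Lambda J) (2 * n)) (Lm J)"
      unfolding sphere_orient_preserving_def
    proof (intro conjI ballI)
      fix x :: "real^('n::{finite,linorder})" assume "x \<in> usphere UNIV"
      then show "Lm J x \<in> usphere (Lambda J)"
        by (simp add: usphere_def Lam[OF oc] norm_LmJ[OF oc])
    next
      fix x :: "real^('n::{finite,linorder})" assume "x \<in> usphere UNIV"
      show "\<exists>f'. (Lm J has_derivative f') (at x within usphere UNIV) \<and>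
             (\<forall>v. pos_tangent UNIV (2 * n) std_pos x v \<longrightarrow>
                  pos_tangent (Lambda J) (2 * n) (cplx_pos (Lambda J) (2 * n)) (Lm J x) (\<lambda>k. f' (v k)))"
      proof (intro exI[of _ "Lm J"] conjI allI impI)
        show "(Lm J has_derivative Lm J) (at x within usphere UNIV)"
          by (rule linear_imp_has_derivative[OF LL[OF oc]])
      next
        fix v assume pt: "pos_tangent UNIV (2 * n) std_pos x v"
        have ob: "is_obasis (tangent (Lambda J) (Lm J x)) (2 * n - 1) (\<lambda>k. Lm J (v k))"
          using is_obasis_image[OF _ LL[OF oc], of "tangent UNIV x" "2 * n - 1" v] pt inj_Lm
          unfolding pos_tangent_def tangent_img[OF oc] by (metis inj_on_subset subset_UNIV)
        have ceq: "(\<lambda>k. if k = 0 then Lm J x else Lm J (v (k - 1))) = (\<lambda>k. Lm J (if k = 0 then x else v (k - 1)))"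
          by auto
        have "cplx_pos (Lambda J) (2 * n) (\<lambda>k. if k = 0 then Lm J x else Lm J (v (k - 1)))"
          unfolding ceq
          by (rule push[OF oc card Be]) (use pt in \<open>simp add: pos_tangent_def\<close>)
        then show "pos_tangent (Lambda J) (2 * n) (cplx_pos (Lambda J) (2 * n)) (Lm J x) (\<lambda>k. Lm J (v k))"
          using ob unfolding pos_tangent_def by simp
      qed
    qed
  qed
qed

end
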